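(* Let $G$ be a group with identity $1_G$ and let $\mathcal{B}_1,\mathcal{B}_2:G\to G$ be arbitrary maps. Let $a\circ b=\mathcal{B}_1(a)b\mathcal{B}_2(a)$, and for $a\in G$ define inner automorphisms $\lambda_a,\mu_a$ of $G$ by $\lambda_a(b)=\mathcal{B}_2(a)^{-1}b\mathcal{B}_2(a)$ and $\mu_a(b)=\mathcal{B}_1(a)b\mathcal{B}_1(a)^{-1}$. The following are equivalent: (i) $\circ$ is associative (and then $(G,\cdot,\circ,\Phi)$ is a skew truss with $\Phi(a)=\mathcal{B}_1(a)\mathcal{B}_2(a)$); (ii) $\lambda_a\lambda_b=\lambda_{a\circ b}$ and $(a\circ b)\circ 1_G=a\circ(b\circ 1_G)$ for all $a,b\in G$; (iii) $\mu_a\mu_b=\mu_{a\circ b}$ and $(a\circ b)\circ 1_G=a\circ(b\circ 1_G)$ for all $a,b\in G$.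
   Context: A skew (left) truss is a quadruple $(G,\cdot,\circ,\Phi)$ where $(G,\cdot)$ is a group, $\circ$ is an associative binary operation on $G$, and $\Phi:G\to G$ is a map with $a\circ(b\cdot c)=(a\circ b)\cdot\Phi(a)^{-1}\cdot(a\circ c)$ for all $a,b,c\in G$. *)

theory Defs
  imports "HOL-Algebra.Group"
begin

definition skew_truss ::
  "('a, 'b) monoid_scheme \<Rightarrow> ('a \<Rightarrow> 'a \<Rightarrow> 'a) \<Rightarrow> ('a \<Rightarrow> 'a) \<Rightarrow> bool" where
  "skew_truss G circ Phi \<longleftrightarrow>
     group G
   \<and> (\<forall>a\<in>carrier G. \<forall>b\<in>carrier G. circ a b \<in> carrier G)
   \<and> (\<forall>a\<in>carrier G. \<forall>b\<in>carrier G. \<forall>c\<in>carrier G.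
        circ (circ a b) c = circ a (circ b c))
   \<and> (\<forall>a\<in>carrier G. Phi a \<in> carrier G)
   \<and> (\<forall>a\<in>carrier G. \<forall>b\<in>carrier G. \<forall>c\<in>carrier G.
        circ a (b \<otimes>\<^bsub>G\<^esub> c) = circ a b \<otimes>\<^bsub>G\<^esub> inv\<^bsub>G\<^esub> (Phi a) \<otimes>\<^bsub>G\<^esub> circ a c)"

definition bcirc :: "('a, 'b) monoid_scheme \<Rightarrow> ('a \<Rightarrow> 'a) \<Rightarrow> ('a \<Rightarrow> 'a) \<Rightarrow> 'a \<Rightarrow> 'a \<Rightarrow> 'a" where
  "bcirc G B1 B2 a b = B1 a \<otimes>\<^bsub>G\<^esub> b \<otimes>\<^bsub>G\<^esub> B2 a"

definition lam :: "('a, 'b) monoid_scheme \<Rightarrow> ('a \<Rightarrow> 'a) \<Rightarrow> 'a \<Rightarrow> 'a \<Rightarrow> 'a" where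
  "lam G B2 a b = inv\<^bsub>G\<^esub> (B2 a) \<otimes>\<^bsub>G\<^esub> b \<otimes>\<^bsub>G\<^esub> B2 a"

definition mu :: "('a, 'b) monoid_scheme \<Rightarrow> ('a \<Rightarrow> 'a) \<Rightarrow> 'a \<Rightarrow> 'a \<Rightarrow> 'a" where
  "mu G B1 a b = B1 a \<otimes>\<^bsub>G\<^esub> b \<otimes>\<^bsub>G\<^esub> inv\<^bsub>G\<^esub> (B1 a)"

end

theory Submission
  imports Defs
begin

lemma (in group) cancel_left_inv: "x \<in> carrier G \<Longrightarrow> y \<in> carrier G \<Longrightarrow> x \<otimes> (inv x \<otimes> y) = y"
  by (simp add: m_assoc[symmetric])
lemma (in group) cancel_inv_left: "x \<in> carrier G \<Longrightarrow> y \<in> carrier G \<Longrightarrow> inv x \<otimes> (x \<otimes> y) = y"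
  by (simp add: m_assoc[symmetric])

lemma (in group) L1:
  assumes [simp]: "p \<in> carrier G" "q \<in> carrier G" "s \<in> carrier G" "t \<in> carrier G"
  shows "(\<forall>c\<in>carrier G. p \<otimes> c \<otimes> q = s \<otimes> c \<otimes> t) \<longleftrightarrow>
    ((\<forall>c\<in>carrier G. inv t \<otimes> c \<otimes> t = inv q \<otimes> c \<otimes> q) \<and> p \<otimes> q = s \<otimes> t)"
proof
  assume H: "\<forall>c\<in>carrier G. p \<otimes> c \<otimes> q = s \<otimes> c \<otimes> t"
  have pq: "p \<otimes> q = s \<otimes> t" using H[rule_format, of "\<one>"] by simp
  have p: "p = s \<otimes> t \<otimes> inv q" using pq by (simp add: inv_solve_right)
  show "(\<forall>c\<in>carrier G. inv t \<otimes> c \<otimes> t = inv q \<otimes> c \<otimes> q) \<and> p \<otimes> q = s \<otimes> t"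
  proof (intro conjI ballI pq)
    fix c assume c[simp]: "c \<in> carrier G"
    have "s \<otimes> (t \<otimes> (inv q \<otimes> c \<otimes> q)) = s \<otimes> (c \<otimes> t)"
      using H[rule_format, OF c] by (simp add: p m_assoc)
    hence e: "t \<otimes> (inv q \<otimes> c \<otimes> q) = c \<otimes> t" by simp
    have "inv t \<otimes> c \<otimes> t = inv t \<otimes> (c \<otimes> t)" by (simp add: m_assoc)
    also have "\<dots> = inv t \<otimes> (t \<otimes> (inv q \<otimes> c \<otimes> q))" by (simp add: e)
    also have "\<dots> = inv q \<otimes> c \<otimes> q" by (simp add: cancel_inv_left)
    finally show "inv t \<otimes> c \<otimes> t = inv q \<otimes> c \<otimes> q" .
  qed
next
  assume H: "(\<forall>c\<in>carrier G. inv t \<otimes> c \<otimes> t = inv q \<otimes> c \<otimes> q) \<and> p \<otimes> q = s \<otimes> t"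
  show "\<forall>c\<in>carrier G. p \<otimes> c \<otimes> q = s \<otimes> c \<otimes> t"
  proof
    fix c assume c[simp]: "c \<in> carrier G"
    have "p \<otimes> c \<otimes> q = (p \<otimes> q) \<otimes> (inv q \<otimes> c \<otimes> q)" by (simp add: m_assoc cancel_left_inv cancel_inv_left)
    also have "\<dots> = (s \<otimes> t) \<otimes> (inv t \<otimes> c \<otimes> t)" using H by simp
    also have "\<dots> = s \<otimes> c \<otimes> t" by (simp add: m_assoc cancel_left_inv cancel_inv_left)
    finally show "p \<otimes> c \<otimes> q = s \<otimes> c \<otimes> t" .
  qed
qed

lemma (in group) L2:
  assumes [simp]: "p \<in> carrier G" "q \<in> carrier G" "s \<in> carrier G" "t \<in> carrier G"
  shows "(\<forall>c\<in>carrier G. p \<otimes> c \<otimes> q = s \<otimes> c \<otimes> t) \<longleftrightarrow>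
    ((\<forall>c\<in>carrier G. s \<otimes> c \<otimes> inv s = p \<otimes> c \<otimes> inv p) \<and> p \<otimes> q = s \<otimes> t)"
proof
  assume H: "\<forall>c\<in>carrier G. p \<otimes> c \<otimes> q = s \<otimes> c \<otimes> t"
  have pq: "p \<otimes> q = s \<otimes> t" using H[rule_format, of "\<one>"] by simp
  have "inv p \<otimes> s \<otimes> t = inv p \<otimes> (p \<otimes> q)" by (simp add: m_assoc pq)
  hence q: "q = inv p \<otimes> s \<otimes> t" by (simp add: cancel_inv_left)
  show "(\<forall>c\<in>carrier G. s \<otimes> c \<otimes> inv s = p \<otimes> c \<otimes> inv p) \<and> p \<otimes> q = s \<otimes> t"
  proof (intro conjI ballI pq)
    fix c assume c[simp]: "c \<in> carrier G"
    have "((p \<otimes> c \<otimes> inv p) \<otimes> s) \<otimes> t = (s \<otimes> c) \<otimes> t"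
      using H[rule_format, OF c] by (simp add: q m_assoc)
    hence e: "(p \<otimes> c \<otimes> inv p) \<otimes> s = s \<otimes> c" by simp
    have "s \<otimes> c \<otimes> inv s = (p \<otimes> c \<otimes> inv p) \<otimes> s \<otimes> inv s" by (simp add: e)
    also have "\<dots> = p \<otimes> c \<otimes> inv p" by (simp add: m_assoc)
    finally show "s \<otimes> c \<otimes> inv s = p \<otimes> c \<otimes> inv p" .
  qed
next
  assume H: "(\<forall>c\<in>carrier G. s \<otimes> c \<otimes> inv s = p \<otimes> c \<otimes> inv p) \<and> p \<otimes> q = s \<otimes> t"
  show "\<forall>c\<in>carrier G. p \<otimes> c \<otimes> q = s \<otimes> c \<otimes> t"
  proof
    fix c assume c[simp]: "c \<in> carrier G"
    have "p \<otimes> c \<otimes> q = (p \<otimes> c \<otimes> inv p) \<otimes> (p \<otimes> q)" by (simp add: m_assoc cancel_left_inv cancel_inv_left)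
    also have "\<dots> = (s \<otimes> c \<otimes> inv s) \<otimes> (s \<otimes> t)" using H by simp
    also have "\<dots> = s \<otimes> c \<otimes> t" by (simp add: m_assoc cancel_left_inv cancel_inv_left)
    finally show "p \<otimes> c \<otimes> q = s \<otimes> c \<otimes> t" .
  qed
qed

theorem theorem3p4:
  fixes G :: "('a, 'b) monoid_scheme" and B1 B2 :: "'a \<Rightarrow> 'a"
  assumes "group G"
    and "B1 \<in> carrier G \<rightarrow> carrier G"
    and "B2 \<in> carrier G \<rightarrow> carrier G"
  defines "circ \<equiv> bcirc G B1 B2"
  shows "((\<forall>a\<in>carrier G. \<forall>b\<in>carrier G. \<forall>c\<in>carrier G.
             circ (circ a b) c = circ a (circ b c))
          \<longleftrightarrow>
          ((\<forall>a\<in>carrier G. \<forall>b\<in>carrier G. \<forall>c\<in>carrier G.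
              lam G B2 a (lam G B2 b c) = lam G B2 (circ a b) c)
           \<and> (\<forall>a\<in>carrier G. \<forall>b\<in>carrier G.
              circ (circ a b) \<one>\<^bsub>G\<^esub> = circ a (circ b \<one>\<^bsub>G\<^esub>))))
       \<and> ((\<forall>a\<in>carrier G. \<forall>b\<in>carrier G. \<forall>c\<in>carrier G.
             circ (circ a b) c = circ a (circ b c))
          \<longleftrightarrow>
          ((\<forall>a\<in>carrier G. \<forall>b\<in>carrier G. \<forall>c\<in>carrier G.
              mu G B1 a (mu G B1 b c) = mu G B1 (circ a b) c)
           \<and> (\<forall>a\<in>carrier G. \<forall>b\<in>carrier G.
              circ (circ a b) \<one>\<^bsub>G\<^esub> = circ a (circ b \<one>\<^bsub>G\<^esub>))))
       \<and> ((\<forall>a\<in>carrier G. \<forall>b\<in>carrier G. \<forall>c\<in>carrier G.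
             circ (circ a b) c = circ a (circ b c))
          \<longrightarrow> skew_truss G circ (\<lambda>a. B1 a \<otimes>\<^bsub>G\<^esub> B2 a))"
proof -
  interpret group G by fact
  have B1: "B1 a \<in> carrier G" if "a \<in> carrier G" for a using assms(2) that by auto
  have B2: "B2 a \<in> carrier G" if "a \<in> carrier G" for a using assms(3) that by auto
  note [simp] = B1 B2
  have cc[simp]: "circ a b \<in> carrier G" if "a \<in> carrier G" "b \<in> carrier G" for a b
    using that by (simp add: circ_def bcirc_def)
  have A: "(\<forall>c\<in>carrier G. circ (circ a b) c = circ a (circ b c)) \<longleftrightarrow>
     (\<forall>c\<in>carrier G. B1 (circ a b) \<otimes>\<^bsub>G\<^esub> c \<otimes>\<^bsub>G\<^esub> B2 (circ a b) = (B1 a \<otimes>\<^bsub>G\<^esub> B1 b) \<otimes>\<^bsub>G\<^esub> c \<otimes>\<^bsub>G\<^esub> (B2 b \<otimes>\<^bsub>G\<^esub> B2 a))"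
    if "a \<in> carrier G" "b \<in> carrier G" for a b
    using that by (simp add: bcirc_def m_assoc circ_def)
  have O: "circ (circ a b) \<one>\<^bsub>G\<^esub> = circ a (circ b \<one>\<^bsub>G\<^esub>) \<longleftrightarrow>
     B1 (circ a b) \<otimes>\<^bsub>G\<^esub> B2 (circ a b) = (B1 a \<otimes>\<^bsub>G\<^esub> B1 b) \<otimes>\<^bsub>G\<^esub> (B2 b \<otimes>\<^bsub>G\<^esub> B2 a)"
    if "a \<in> carrier G" "b \<in> carrier G" for a b
    using that by (simp add: bcirc_def m_assoc circ_def)
  have La: "(\<forall>c\<in>carrier G. lam G B2 a (lam G B2 b c) = lam G B2 (circ a b) c) \<longleftrightarrow>
     (\<forall>c\<in>carrier G. inv\<^bsub>G\<^esub> (B2 b \<otimes>\<^bsub>G\<^esub> B2 a) \<otimes>\<^bsub>G\<^esub> c \<otimes>\<^bsub>G\<^esub> (B2 b \<otimes>\<^bsub>G\<^esub> B2 a) = inv\<^bsub>G\<^esub> (B2 (circ a b)) \<otimes>\<^bsub>G\<^esub> c \<otimes>\<^bsub>G\<^esub> B2 (circ a b))"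
    if "a \<in> carrier G" "b \<in> carrier G" for a b
    using that by (simp add: lam_def m_assoc inv_mult_group)
  have Mu: "(\<forall>c\<in>carrier G. mu G B1 a (mu G B1 b c) = mu G B1 (circ a b) c) \<longleftrightarrow>
     (\<forall>c\<in>carrier G. (B1 a \<otimes>\<^bsub>G\<^esub> B1 b) \<otimes>\<^bsub>G\<^esub> c \<otimes>\<^bsub>G\<^esub> inv\<^bsub>G\<^esub> (B1 a \<otimes>\<^bsub>G\<^esub> B1 b) = B1 (circ a b) \<otimes>\<^bsub>G\<^esub> c \<otimes>\<^bsub>G\<^esub> inv\<^bsub>G\<^esub> (B1 (circ a b)))"
    if "a \<in> carrier G" "b \<in> carrier G" for a b
    using that by (simp add: mu_def m_assoc inv_mult_group)
  have E1: "(\<forall>c\<in>carrier G. circ (circ a b) c = circ a (circ b c)) \<longleftrightarrow>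
      (\<forall>c\<in>carrier G. lam G B2 a (lam G B2 b c) = lam G B2 (circ a b) c) \<and>
       circ (circ a b) \<one>\<^bsub>G\<^esub> = circ a (circ b \<one>\<^bsub>G\<^esub>)"
    if "a \<in> carrier G" "b \<in> carrier G" for a b
        apply (simp only: A[OF that] O[OF that] La[OF that])
    by (rule L1) (simp_all add: that)
  have E2: "(\<forall>c\<in>carrier G. circ (circ a b) c = circ a (circ b c)) \<longleftrightarrow>
      (\<forall>c\<in>carrier G. mu G B1 a (mu G B1 b c) = mu G B1 (circ a b) c) \<and>
       circ (circ a b) \<one>\<^bsub>G\<^esub> = circ a (circ b \<one>\<^bsub>G\<^esub>)"
    if "a \<in> carrier G" "b \<in> carrier G" for a b
        apply (simp only: A[OF that] O[OF that] Mu[OF that])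
    by (rule L2) (simp_all add: that)
  have ST: "skew_truss G circ (\<lambda>a. B1 a \<otimes>\<^bsub>G\<^esub> B2 a)"
    if "\<forall>a\<in>carrier G. \<forall>b\<in>carrier G. \<forall>c\<in>carrier G. circ (circ a b) c = circ a (circ b c)"
    unfolding skew_truss_def
  proof (intro conjI ballI)
    fix a b c assume [simp]: "a \<in> carrier G" "b \<in> carrier G" "c \<in> carrier G"
    have "circ a b \<otimes>\<^bsub>G\<^esub> inv\<^bsub>G\<^esub> (B1 a \<otimes>\<^bsub>G\<^esub> B2 a) \<otimes>\<^bsub>G\<^esub> circ a c
        = B1 a \<otimes>\<^bsub>G\<^esub> (b \<otimes>\<^bsub>G\<^esub> (B2 a \<otimes>\<^bsub>G\<^esub> (inv\<^bsub>G\<^esub> (B2 a) \<otimes>\<^bsub>G\<^esub> (inv\<^bsub>G\<^esub> (B1 a) \<otimes>\<^bsub>G\<^esub> (B1 a \<otimes>\<^bsub>G\<^esub> (c \<otimes>\<^bsub>G\<^esub> B2 a))))))"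
      by (simp add: circ_def bcirc_def m_assoc inv_mult_group)
    also have "\<dots> = circ a (b \<otimes>\<^bsub>G\<^esub> c)"
      by (simp add: circ_def bcirc_def m_assoc cancel_left_inv cancel_inv_left)
    finally show "circ a (b \<otimes>\<^bsub>G\<^esub> c) = circ a b \<otimes>\<^bsub>G\<^esub> inv\<^bsub>G\<^esub> (B1 a \<otimes>\<^bsub>G\<^esub> B2 a) \<otimes>\<^bsub>G\<^esub> circ a c" by simp
  qed (use that assms(1) in auto)
  have I1: "(\<forall>a\<in>carrier G. \<forall>b\<in>carrier G. \<forall>c\<in>carrier G. circ (circ a b) c = circ a (circ b c))
      \<longleftrightarrow> (\<forall>a\<in>carrier G. \<forall>b\<in>carrier G. (\<forall>c\<in>carrier G. lam G B2 a (lam G B2 b c) = lam G B2 (circ a b) c) \<and>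
       circ (circ a b) \<one>\<^bsub>G\<^esub> = circ a (circ b \<one>\<^bsub>G\<^esub>))"
    using E1 by simp
  have I2: "(\<forall>a\<in>carrier G. \<forall>b\<in>carrier G. \<forall>c\<in>carrier G. circ (circ a b) c = circ a (circ b c))
      \<longleftrightarrow> (\<forall>a\<in>carrier G. \<forall>b\<in>carrier G. (\<forall>c\<in>carrier G. mu G B1 a (mu G B1 b c) = mu G B1 (circ a b) c) \<and>
       circ (circ a b) \<one>\<^bsub>G\<^esub> = circ a (circ b \<one>\<^bsub>G\<^esub>))"
    using E2 by simp
  show ?thesis
    apply (rule conjI, rule I1[unfolded ball_conj_distrib])
    apply (rule conjI, rule I2[unfolded ball_conj_distrib])
    apply (rule impI, erule ST)
    done
qed

end
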